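(* Let $A(x)$ be an Alltop function on a finite field $\mathbb{F}_q$ of characteristic $p$. For $a,b\in\mathbb{F}_q$ let $\vec{v}_{ab}=\frac{1}{\sqrt{q}}\big(\omega_p^{\mathrm{tr}(A(x+a)+b(x+a))}\big)_{x\in\mathbb{F}_q}$, and let $C_A=\{\vec{v}_{ab}:a,b\in\mathbb{F}_q\}\cup E$, where $E$ is the standard basis of $\mathbb{C}^q$. Then $C_A$ is a $(q^2+q,q)$ signal set with $I_{\max}(C_A)=\frac{1}{\sqrt{q}}$.
   Context: $\omega_p=e^{2\pi i/p}$ and $\mathrm{tr}$ is the absolute trace from $\mathbb{F}_q$ to $\mathbb{F}_p$. For $f:\mathbb{F}_q\to\mathbb{F}_q$, $\Delta_{f,a}(x)=f(x+a)-f(x)$; $f$ is planar if $x\mapsto\Delta_{f,a}(x)$ is a bijection for all $a\neq0$; $A$ is an Alltop function if $\Delta_{A,a}$ is planar for all $a\neq0$. An $(N,K)$ signal set is a set of $N$ unit vectors $\{\vec{v}_i\}$ in $\mathbb{C}^K$, and $I_{\max}=\max_{i<j}|\langle\vec{v}_i|\vec{v}_j\rangle|$. *)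

theory Defs
  imports "HOL-Analysis.Analysis"
begin

text \<open>Finite fields are modelled by a type of class {field, finite}; p = CHAR('a), q = CARD('a).\<close>

definition field_degree :: "'a::{field,finite} itself \<Rightarrow> nat" where
  "field_degree T = (THE n. CARD('a) = CHAR('a) ^ n)"

definition abs_trace :: "'a::{field,finite} \<Rightarrow> 'a" where
  "abs_trace x = (\<Sum>i<field_degree TYPE('a). x ^ (CHAR('a) ^ i))"

definition prime_field_rep :: "'a::{field,finite} \<Rightarrow> nat" where
  "prime_field_rep y = (THE k. k < CHAR('a) \<and> of_nat k = y)"

definition omega_tr :: "'a::{field,finite} \<Rightarrow> complex" where
  "omega_tr y = exp (2 * pi * \<i> * of_nat (prime_field_rep (abs_trace y)) / of_nat CHAR('a))"

definition difference :: "('a::ab_group_add \<Rightarrow> 'a) \<Rightarrow> 'a \<Rightarrow> 'a \<Rightarrow> 'a" where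
  "difference f a x = f (x + a) - f x"

definition planar :: "('a::{field,finite} \<Rightarrow> 'a) \<Rightarrow> bool" where
  "planar f \<longleftrightarrow> (\<forall>a. a \<noteq> 0 \<longrightarrow> bij (difference f a))"

definition alltop :: "('a::{field,finite} \<Rightarrow> 'a) \<Rightarrow> bool" where
  "alltop A \<longleftrightarrow> (\<forall>a. a \<noteq> 0 \<longrightarrow> planar (difference A a))"

text \<open>Vectors in C^q are functions F_q -> complex (coordinates indexed by F_q).
  Hermitian inner product, conjugate-linear in the first argument.\<close>
definition cinner :: "('a::finite \<Rightarrow> complex) \<Rightarrow> ('a \<Rightarrow> complex) \<Rightarrow> complex" where
  "cinner u v = (\<Sum>x\<in>UNIV. cnj (u x) * v x)"

definition vnorm :: "('a::finite \<Rightarrow> complex) \<Rightarrow> real" where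
  "vnorm v = sqrt (cmod (cinner v v))"

definition signal_set :: "('a::finite \<Rightarrow> complex) set \<Rightarrow> nat \<Rightarrow> nat \<Rightarrow> bool" where
  "signal_set C N K \<longleftrightarrow> K = CARD('a) \<and> card C = N \<and> (\<forall>v\<in>C. vnorm v = 1)"

definition I_max :: "('a::finite \<Rightarrow> complex) set \<Rightarrow> real" where
  "I_max C = Max {cmod (cinner u v) | u v. u \<in> C \<and> v \<in> C \<and> u \<noteq> v}"

definition std_basis :: "('a::finite \<Rightarrow> complex) set" where
  "std_basis = {(\<lambda>y. if y = x then 1 else 0) | x. True}"

definition alltop_vec :: "('a::{field,finite} \<Rightarrow> 'a) \<Rightarrow> 'a \<Rightarrow> 'a \<Rightarrow> 'a \<Rightarrow> complex" where
  "alltop_vec A a b = (\<lambda>x. omega_tr (A (x + a) + b * (x + a)) / sqrt (real CARD('a)))"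

definition alltop_set :: "('a::{field,finite} \<Rightarrow> 'a) \<Rightarrow> ('a \<Rightarrow> complex) set" where
  "alltop_set A = {alltop_vec A a b | a b. True} \<union> std_basis"

end

theory Submission imports Defs "HOL-Computational_Algebra.Computational_Algebra" "HOL-Number_Theory.Cong"
begin


lemma ff_CHAR_prime: "prime CHAR('a::{field,finite})"
  by (rule prime_CHAR_semidom) (rule finite_imp_CHAR_pos, simp)

lemma ff_CHAR_ge2: "CHAR('a::{field,finite}) \<ge> 2"
  using ff_CHAR_prime prime_ge_2_nat by blast

lemma ff_of_nat_eq: "(of_nat x :: 'a::{field,finite}) = of_nat y \<longleftrightarrow> x mod CHAR('a) = y mod CHAR('a)"
  by (simp add: of_nat_eq_iff_cong_CHAR cong_def)

lemma ff_of_nat_mod: "(of_nat (x mod CHAR('a)) :: 'a::{field,finite}) = of_nat x"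
  by (simp add: ff_of_nat_eq)

lemma of_nat_pow_CHAR: "(of_nat k :: 'a::{field,finite}) ^ CHAR('a) = of_nat k"
proof (induction k)
  case 0 thus ?case using ff_CHAR_ge2[where 'a='a] by (simp add: power_0_left)
next
  case (Suc k)
  have "(of_nat (Suc k) :: 'a) ^ CHAR('a) = (of_nat k + 1) ^ CHAR('a)" by (metis of_nat_Suc add.commute)
  also have "\<dots> = of_nat k ^ CHAR('a) + 1 ^ CHAR('a)"
    by (rule freshmans_dream[OF ff_CHAR_prime refl])
  finally show ?case using Suc by (metis of_nat_Suc add.commute power_one)
qed

lemma ff_of_nat_inv:
  assumes "0 < j" "j < CHAR('a::{field,finite})"
  shows "\<exists>j'. (of_nat j' :: 'a) * of_nat j = 1"
proof -
  let ?p = "CHAR('a)"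
  have nz: "(of_nat j :: 'a) \<noteq> 0" using assms by (simp add: ff_of_nat_eq[of j 0, simplified])
  have "?p = Suc (Suc (?p - 2))" using ff_CHAR_ge2[where 'a='a] by simp
  hence "(of_nat j :: 'a) ^ (?p - 2) * of_nat j * of_nat j = of_nat j ^ ?p"
    by (metis power_Suc2)
  also have "\<dots> = 1 * of_nat j" using of_nat_pow_CHAR by simp
  finally have "(of_nat j :: 'a) ^ (?p - 2) * of_nat j = 1" using nz by simp
  thus ?thesis by (intro exI[of _ "j ^ (?p - 2)"]) simp
qed

lemma ff_neg: "(of_nat (CHAR('a) - 1) :: 'a::{field,finite}) = -1"
proof -
  have "(of_nat (CHAR('a) - 1) :: 'a) + 1 = of_nat (CHAR('a) - 1 + 1)" by simp
  also have "CHAR('a) - 1 + 1 = CHAR('a)" using ff_CHAR_ge2[where 'a='a] by simp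
  finally have "(of_nat (CHAR('a) - 1) :: 'a) + 1 = 0" by simp
  thus ?thesis by (simp add: eq_neg_iff_add_eq_0)
qed

definition psub :: "'a::{field,finite} set \<Rightarrow> bool" where
  "psub S \<longleftrightarrow> 0 \<in> S \<and> (\<forall>x\<in>S. \<forall>y\<in>S. x + y \<in> S) \<and> (\<forall>x\<in>S. \<forall>k. of_nat k * x \<in> S)"

lemma psub_diff: assumes "psub S" "x \<in> S" "y \<in> S" shows "x - y \<in> S"
proof -
  have "of_nat (CHAR('a) - 1) * y \<in> S" using assms unfolding psub_def by blast
  hence "-1 * y \<in> S" by (simp only: ff_neg)
  hence "- y \<in> S" by simp
  hence "x + - y \<in> S" using assms unfolding psub_def by blast
  thus ?thesis by simp
qed

lemma psub_inj_aux:
  fixes S :: "'a::{field,finite} set"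
  assumes "psub S" "s \<in> S" "s' \<in> S" "b \<notin> S" "k' < k" "k < CHAR('a)"
    and eq: "s + of_nat k * b = s' + of_nat k' * b"
  shows False
proof -
  have "(of_nat (k - k') :: 'a) * b = s' - s"
  proof -
    have "s' - s = (s' + of_nat k' * b) - of_nat k' * b - s" by simp
    also have "\<dots> = (s + of_nat k * b) - of_nat k' * b - s" using eq by simp
    also have "\<dots> = (of_nat k - of_nat k') * b" by (simp add: algebra_simps)
    also have "(of_nat k - of_nat k' :: 'a) = of_nat (k - k')" using assms(5) by (simp add: of_nat_diff)
    finally show ?thesis by simp
  qed
  moreover have kk: "0 < k - k'" "k - k' < CHAR('a)" using assms(5,6) by auto
  moreover obtain j' where j': "(of_nat j' :: 'a) * of_nat (k - k') = 1"
    using ff_of_nat_inv[OF kk] by blast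
  ultimately have "b = of_nat j' * (s' - s)"
    by (metis mult.assoc mult_1)
  moreover have "s' - s \<in> S" using psub_diff assms by blast
  ultimately have "b \<in> S" using assms(1) unfolding psub_def by simp
  thus False using assms(4) by simp
qed

lemma ff_card_pow: "\<exists>n. CARD('a::{field,finite}) = CHAR('a) ^ n"
proof -
  let ?p = "CHAR('a)"
  define F where "F = {S::'a set. psub S \<and> (\<exists>n. card S = ?p ^ n)}"
  have "{0} \<in> F" unfolding F_def psub_def by (auto intro: exI[of _ 0])
  have "finite F" by simp
  define M where "M = Max (card ` F)"
  have "M \<in> card ` F" unfolding M_def using \<open>finite F\<close> \<open>{0} \<in> F\<close> by (intro Max_in) auto
  then obtain S where SF: "S \<in> F" and cS: "card S = M" by auto
  have mx: "card T \<le> card S" if "T \<in> F" for T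
    unfolding cS M_def using \<open>finite F\<close> that by simp
  from SF obtain n where ps: "psub S" and n: "card S = ?p ^ n" unfolding F_def by auto
  show ?thesis
  proof (cases "S = UNIV")
    case True thus ?thesis using n by auto
  next
    case False
    then obtain b where b: "b \<notin> S" by auto
    define T where "T = (\<lambda>(s,k). s + of_nat k * b) ` (S \<times> {..<?p})"
    have inj: "inj_on (\<lambda>(s,k). s + of_nat k * b) (S \<times> {..<?p})"
    proof (rule inj_onI, clarify)
      fix s k s' k' assume h: "s \<in> S" "k < ?p" "s' \<in> S" "k' < ?p"
        "s + of_nat k * b = s' + of_nat k' * (b::'a)"
      have "k = k'"
      proof (rule ccontr)
        assume "k \<noteq> k'"
        hence "k' < k \<or> k < k'" by auto
        thus False
        proof
          assume "k' < k" thus False using psub_inj_aux[OF ps h(1) h(3) b _ h(2) h(5)] by simp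
        next
          assume "k < k'" thus False using psub_inj_aux[OF ps h(3) h(1) b _ h(4) h(5)[symmetric]] by simp
        qed
      qed
      thus "s = s' \<and> k = k'" using h(5) by simp
    qed
    have cT: "card T = ?p ^ Suc n"
      unfolding T_def using card_image[OF inj] n by (simp add: card_cartesian_product)
    have pT: "psub T"
      unfolding psub_def
    proof (intro conjI ballI allI)
      show "0 \<in> T" unfolding T_def using ps ff_CHAR_ge2[where 'a='a]
        by (intro image_eqI[of _ _ "(0,0)"]) (auto simp: psub_def)
    next
      fix x y assume "x \<in> T" "y \<in> T"
      then obtain s k s' k' where x: "x = s + of_nat k * b" "s \<in> S"
         and y: "y = s' + of_nat k' * b" "s' \<in> S" unfolding T_def by auto
      have "x + y = (s + s') + of_nat ((k + k') mod ?p) * b"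
        unfolding x y ff_of_nat_mod by (simp add: algebra_simps)
      moreover have "s + s' \<in> S" using ps x y unfolding psub_def by blast
      moreover have "(k + k') mod ?p < ?p" using ff_CHAR_ge2[where 'a='a] by simp
      ultimately show "x + y \<in> T" unfolding T_def by auto
    next
      fix x :: 'a and c :: nat assume "x \<in> T"
      then obtain s k where x: "x = s + of_nat k * b" "s \<in> S" unfolding T_def by auto
      have "of_nat c * x = of_nat c * s + of_nat ((c * k) mod ?p) * b"
        unfolding x ff_of_nat_mod by (simp add: algebra_simps)
      moreover have "of_nat c * s \<in> S" using ps x unfolding psub_def by blast
      moreover have "(c * k) mod ?p < ?p" using ff_CHAR_ge2[where 'a='a] by simp
      ultimately show "of_nat c * x \<in> T" unfolding T_def by auto
    qed
    have "T \<in> F" unfolding F_def using pT cT by blast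
    hence "card T \<le> card S" by (rule mx)
    moreover have "?p ^ n < ?p ^ Suc n" using ff_CHAR_ge2[where 'a='a] by simp
    ultimately show ?thesis using cT n by simp
  qed
qed

lemma ff_degree: "CARD('a::{field,finite}) = CHAR('a) ^ field_degree TYPE('a)"
proof -
  obtain n where n: "CARD('a) = CHAR('a) ^ n" using ff_card_pow by blast
  have "field_degree TYPE('a) = n" unfolding field_degree_def
  proof (rule the_equality)
    fix m assume "CARD('a) = CHAR('a) ^ m"
    thus "m = n" using n ff_CHAR_ge2[where 'a='a] power_inject_exp[of "CHAR('a)" m n] by simp
  qed (rule n)
  thus ?thesis using n by simp
qed




lemma ff_card_ge2: "CARD('a::{field,finite}) \<ge> 2"
proof -
  have "card {0::'a, 1} \<le> CARD('a)" by (rule card_mono) auto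
  thus ?thesis by simp
qed

lemma ff_pow_card: "(x::'a::{field,finite}) ^ CARD('a) = x"
proof (cases "x = 0")
  case False
  have "x * (\<Prod>y\<in>UNIV-{0}. x * y) = x * x ^ (card (UNIV :: 'a set) - 1) * \<Prod>(UNIV-{0})"
    by (simp add: prod.distrib mult_ac)
  also have "x * x ^ (card (UNIV :: 'a set) - 1) = x ^ Suc (card (UNIV :: 'a set) - 1)"
    by (subst power_Suc) auto
  also have "Suc (card (UNIV :: 'a set) - 1) = card (UNIV :: 'a set)"
    using finite_UNIV_card_ge_0[where ?'a = 'a] by simp
  also have "(\<Prod>y\<in>UNIV-{0}. x * y) = (\<Prod>y\<in>UNIV-{0}. y)"
    by (rule prod.reindex_bij_witness[of _ "\<lambda>y. y / x" "\<lambda>y. x * y"]) (use False in auto)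
  finally show ?thesis
    by simp
qed (use finite_UNIV_card_ge_0[where ?'a = 'a] in auto)

lemma tr_add: "abs_trace (x + y :: 'a::{field,finite}) = abs_trace x + abs_trace y"
  unfolding abs_trace_def
  by (simp add: freshmans_dream'[OF ff_CHAR_prime refl] sum.distrib)

lemma tr_pow: "abs_trace (x :: 'a::{field,finite}) ^ CHAR('a) = abs_trace x"
proof -
  let ?p = "CHAR('a)" and ?n = "field_degree TYPE('a)"
  define f where "f i = x ^ (?p ^ i)" for i
  have "abs_trace x ^ ?p = (\<Sum>i<?n. f i ^ ?p)"
    unfolding abs_trace_def f_def by (rule freshmans_dream_sum[OF ff_CHAR_prime refl])
  also have "\<dots> = (\<Sum>i<?n. f (Suc i))"
    unfolding f_def by (simp add: power_mult[symmetric] mult.commute)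
  finally have 1: "abs_trace x ^ ?p = (\<Sum>i<?n. f (Suc i))" .
  have "f 0 + (\<Sum>i<?n. f (Suc i)) = (\<Sum>i<Suc ?n. f i)" by (simp only: sum.lessThan_Suc_shift)
  also have "\<dots> = (\<Sum>i<?n. f i) + f ?n" by simp
  finally have 2: "f 0 + (\<Sum>i<?n. f (Suc i)) = (\<Sum>i<?n. f i) + f ?n" .
  have "f ?n = x" unfolding f_def using ff_degree[where 'a='a] ff_pow_card[of x] by simp
  moreover have "f 0 = x" unfolding f_def by simp
  ultimately have "(\<Sum>i<?n. f (Suc i)) = (\<Sum>i<?n. f i)" using 2 by (simp add: add.commute)
  thus ?thesis using 1 unfolding abs_trace_def f_def by simp
qed

lemma prime_field_elem:
  assumes "(y :: 'a::{field,finite}) ^ CHAR('a) = y"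
  shows "\<exists>k < CHAR('a). y = of_nat k"
proof -
  let ?p = "CHAR('a)"
  define P :: "'a poly" where "P = Polynomial.monom 1 ?p - [:0, 1:]"
  obtain m where m: "?p = Suc (Suc m)" using ff_CHAR_ge2[where 'a='a] by (metis add_2_eq_Suc le_Suc_ex)
  have cP: "coeff P ?p = 1" unfolding P_def by (simp add: m)
  hence P0: "P \<noteq> 0" by auto
  have dP: "degree P \<le> ?p" unfolding P_def
    by (rule degree_diff_le) (use ff_CHAR_ge2[where 'a='a] in \<open>auto intro: degree_monom_le simp: degree_pCons_eq_if\<close>)
  define R where "R = {x. poly P x = 0}"
  have cR: "card R \<le> ?p" unfolding R_def using card_poly_roots_bound[OF P0] dP by simp
  have fR: "finite R" by simp
  have sub: "of_nat ` {..<?p} \<subseteq> R"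
    unfolding R_def P_def by (auto simp: poly_monom of_nat_pow_CHAR)
  have inj: "inj_on (of_nat :: nat \<Rightarrow> 'a) {..<?p}"
    by (rule inj_onI) (auto simp: ff_of_nat_eq)
  have cI: "card (of_nat ` {..<?p} :: 'a set) = ?p" using card_image[OF inj] by simp
  have "of_nat ` {..<?p} = R"
    by (rule card_subset_eq[OF fR sub]) (use cI cR card_mono[OF fR sub] in simp)
  moreover have "y \<in> R" unfolding R_def P_def using assms by (simp add: poly_monom)
  ultimately show ?thesis by auto
qed

lemma rep_of_nat: "k < CHAR('a::{field,finite}) \<Longrightarrow> prime_field_rep (of_nat k :: 'a) = k"
  unfolding prime_field_rep_def
  by (rule the_equality) (auto simp: ff_of_nat_eq)

lemma tr_elem: "\<exists>k < CHAR('a). abs_trace (x::'a::{field,finite}) = of_nat k"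
  by (rule prime_field_elem[OF tr_pow])

lemma omega_nat: "k < CHAR('a) \<Longrightarrow> abs_trace (x::'a::{field,finite}) = of_nat k \<Longrightarrow>
   omega_tr x = exp (2 * pi * \<i> * of_nat k / of_nat CHAR('a))"
  unfolding omega_tr_def by (simp add: rep_of_nat)

lemma omega_add: "omega_tr (x + y :: 'a::{field,finite}) = omega_tr x * omega_tr y"
proof -
  let ?p = "CHAR('a)"
  obtain a where a: "a < ?p" "abs_trace x = of_nat a" using tr_elem by blast
  obtain b where b: "b < ?p" "abs_trace y = of_nat b" using tr_elem by blast
  define c where "c = (a + b) mod ?p"
  define d where "d = (a + b) div ?p"
  have cp: "c < ?p" unfolding c_def using ff_CHAR_ge2[where 'a='a] by simp
  have "abs_trace (x + y) = of_nat c" unfolding c_def ff_of_nat_mod by (simp add: tr_add a b)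
  hence "omega_tr (x + y) = exp (2 * pi * \<i> * of_nat c / of_nat ?p)" using omega_nat cp by blast
  moreover have "omega_tr x * omega_tr y = exp (2 * pi * \<i> * of_nat a / of_nat ?p + 2 * pi * \<i> * of_nat b / of_nat ?p)"
    using omega_nat[OF a] omega_nat[OF b] by (simp add: exp_add)
  moreover have "2 * pi * \<i> * of_nat a / of_nat ?p + 2 * pi * \<i> * of_nat b / of_nat ?p
      = 2 * pi * \<i> * of_nat c / of_nat ?p + \<i> * (of_nat d * (of_real pi * 2))"
  proof -
    have ab: "a + b = c + ?p * d" unfolding c_def d_def by simp
    have pnz: "(of_nat ?p :: complex) \<noteq> 0" using ff_CHAR_ge2[where 'a='a] by simp
    have e: "(of_nat a + of_nat b :: complex) = of_nat c + of_nat ?p * of_nat d"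
      using ab by (metis of_nat_add of_nat_mult)
    have "2 * pi * \<i> * of_nat a / of_nat ?p + 2 * pi * \<i> * of_nat b / of_nat ?p
       = 2 * pi * \<i> * (of_nat a + of_nat b) / of_nat ?p" by (simp add: add_divide_distrib ring_distribs)
    also have "\<dots> = 2 * pi * \<i> * (of_nat c + of_nat ?p * of_nat d) / of_nat ?p" using e by simp
    also have "\<dots> = 2 * pi * \<i> * of_nat c / of_nat ?p + \<i> * (of_nat d * (of_real pi * 2))"
      using pnz by (simp add: field_simps)
    finally show ?thesis .
  qed
  ultimately show ?thesis by (simp only: exp_add exp_2pi_1_nat mult_1_right)
qed

lemma omega_norm: "cmod (omega_tr (x::'a::{field,finite})) = 1"
proof -
  obtain a where a: "a < CHAR('a)" "abs_trace x = of_nat a" using tr_elem by blast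
  have "2 * pi * \<i> * of_nat a / of_nat CHAR('a) = \<i> * of_real (2 * pi * a / CHAR('a))"
    by simp
  thus ?thesis using omega_nat[OF a] by simp
qed

lemma omega_zero: "omega_tr (0::'a::{field,finite}) = 1"
proof -
  have "abs_trace (0::'a) = of_nat 0"
    unfolding abs_trace_def using ff_CHAR_ge2[where 'a='a] by (simp add: power_0_left)
  hence "omega_tr (0::'a) = exp (2 * pi * \<i> * of_nat 0 / of_nat CHAR('a))"
    using ff_CHAR_ge2[where 'a='a] by (intro omega_nat) auto
  thus ?thesis by simp
qed

lemma omega_neg: "omega_tr (- x :: 'a::{field,finite}) = cnj (omega_tr x)"
proof -
  have 1: "omega_tr (- x) * omega_tr x = 1" by (metis add.left_inverse omega_add omega_zero)
  have "cnj (omega_tr x) * omega_tr x = of_real ((cmod (omega_tr x))^2)"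
    by (subst complex_norm_square) (simp add: mult.commute)
  hence 2: "cnj (omega_tr x) * omega_tr x = 1" using omega_norm[of x] by simp
  have "omega_tr x \<noteq> 0" using 2 by auto
  thus ?thesis using 1 2 by (metis mult_right_cancel)
qed

lemma omega_diff: "omega_tr (x - y :: 'a::{field,finite}) = omega_tr x * cnj (omega_tr y)"
  using omega_add[of x "-y"] omega_neg[of y] by simp




lemma tr_nonzero: "\<exists>y::'a::{field,finite}. abs_trace y \<noteq> 0"
proof (rule ccontr)
  assume "\<not> ?thesis"
  hence all: "abs_trace y = 0" for y :: 'a by auto
  let ?p = "CHAR('a)" and ?n = "field_degree TYPE('a)"
  have p2: "?p \<ge> 2" by (rule ff_CHAR_ge2)
  have q: "CARD('a) = ?p ^ ?n" by (rule ff_degree)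
  have "?n \<noteq> 0" using q ff_card_ge2[where 'a='a] by (cases "?n") auto
  then obtain m where m: "?n = Suc m" by (cases ?n) auto
  define T :: "'a poly" where "T = (\<Sum>i<?n. Polynomial.monom 1 (?p ^ i))"
  have cT: "coeff T k = (\<Sum>i<?n. if ?p ^ i = k then 1 else 0)" for k
    unfolding T_def by (simp add: coeff_sum)
  have eqv: "(?p ^ i = ?p ^ m) \<longleftrightarrow> i = m" for i using p2 by (simp add: power_inject_exp)
  have "coeff T (?p ^ m) = 1" unfolding cT eqv using m by simp
  hence T0: "T \<noteq> 0" by auto
  have dT: "degree T \<le> ?p ^ m"
  proof (rule degree_le, intro allI impI)
    fix k assume k: "?p ^ m < k"
    have "?p ^ i \<noteq> k" if "i < ?n" for i
    proof -
      have "?p ^ i \<le> ?p ^ m" using that m p2 by (intro power_increasing) auto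
      thus ?thesis using k by simp
    qed
    thus "coeff T k = 0" unfolding cT by (intro sum.neutral) auto
  qed
  have "poly T y = 0" for y
    unfolding T_def using all[of y] by (simp add: poly_sum poly_monom abs_trace_def)
  hence "{x. poly T x = 0} = UNIV" by auto
  hence "CARD('a) \<le> ?p ^ m" using card_poly_roots_bound[OF T0] dT by simp
  moreover have "?p ^ m < ?p ^ ?n" using m p2 by simp
  ultimately show False using q by simp
qed

lemma omega_nontriv: "\<exists>y::'a::{field,finite}. omega_tr y \<noteq> 1"
proof -
  obtain y :: 'a where y: "abs_trace y \<noteq> 0" using tr_nonzero by blast
  obtain k where k: "k < CHAR('a)" "abs_trace y = of_nat k" using tr_elem by blast
  have k0: "k \<noteq> 0" using k y by (cases k) auto
  have om: "omega_tr y = exp (2 * pi * \<i> * of_nat k / of_nat CHAR('a))" using omega_nat[OF k] .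
  have "omega_tr y \<noteq> 1"
  proof
    assume "omega_tr y = 1"
    then obtain n :: int where n: "Im (2 * pi * \<i> * of_nat k / of_nat CHAR('a)) = of_int (2 * n) * pi"
      using om exp_eq_1 by metis
    have im: "Im (2 * pi * \<i> * of_nat k / of_nat CHAR('a)) = 2 * pi * real k / real CHAR('a)"
      by simp
    have "real k / real CHAR('a) = (2 * pi * real k / real CHAR('a)) / (2 * pi)" by simp
    also have "\<dots> = (of_int (2 * n) * pi) / (2 * pi)" using n im by simp
    also have "\<dots> = of_int n" by simp
    finally have "real k / real CHAR('a) = of_int n" .
    hence e: "real k = of_int n * real CHAR('a)" using k by (simp add: field_simps)
    have "0 < n" proof (rule ccontr)
      assume "\<not> 0 < n" hence "of_int n * real CHAR('a) \<le> 0" by (simp add: mult_nonpos_nonneg)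
      thus False using e k0 by simp
    qed
    hence "(1::real) \<le> of_int n" by simp
    hence "1 * real CHAR('a) \<le> of_int n * real CHAR('a)" by (rule mult_right_mono) simp
    hence "real CHAR('a) \<le> of_int n * real CHAR('a)" by simp
    moreover have "real k < real CHAR('a)" using k by simp
    ultimately show False using e by linarith
  qed
  thus ?thesis by blast
qed

lemma char_sum_zero: "(\<Sum>x\<in>UNIV. omega_tr (x::'a::{field,finite})) = 0"
proof -
  obtain y :: 'a where y: "omega_tr y \<noteq> 1" using omega_nontriv by blast
  let ?S = "\<Sum>x\<in>UNIV. omega_tr (x::'a)"
  have b: "bij_betw (\<lambda>x. x + y) UNIV (UNIV::'a set)"
    by (rule bij_betwI[of _ _ _ "\<lambda>x. x - y"]) auto
  have "?S = (\<Sum>x\<in>UNIV. omega_tr (x + y))" using sum.reindex_bij_betw[OF b, of omega_tr] by simp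
  also have "\<dots> = ?S * omega_tr y" by (simp add: omega_add sum_distrib_right)
  finally have "?S * (omega_tr y - 1) = 0" by (simp add: algebra_simps)
  thus ?thesis using y by simp
qed

lemma char_sum_bij: "bij (g :: 'a::{field,finite} \<Rightarrow> 'a) \<Longrightarrow> (\<Sum>x\<in>UNIV. omega_tr (g x)) = 0"
  using sum.reindex_bij_betw[of g UNIV UNIV omega_tr] char_sum_zero by (simp add: bij_def bij_betw_def)

lemma char_sum_lin: "(c::'a::{field,finite}) \<noteq> 0 \<Longrightarrow> (\<Sum>x\<in>UNIV. omega_tr (c * x)) = 0"
  by (rule char_sum_bij) (rule bij_betwI[of _ _ _ "\<lambda>x. x / c"], auto)

lemma planar_sum:
  fixes f :: "'a::{field,finite} \<Rightarrow> 'a"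
  assumes "planar f"
  shows "(cmod (\<Sum>x\<in>UNIV. omega_tr (f x + c * x)))^2 = real CARD('a)"
proof -
  define g where "g x = f x + c * x" for x
  let ?S = "\<Sum>x\<in>UNIV. omega_tr (g x)"
  have "?S * cnj ?S = (\<Sum>y\<in>UNIV. \<Sum>z\<in>UNIV. omega_tr (g y) * cnj (omega_tr (g z)))"
    by (simp add: sum_product)
  also have "\<dots> = (\<Sum>z\<in>UNIV. \<Sum>y\<in>UNIV. omega_tr (g y - g z))"
    by (subst sum.swap) (simp add: omega_diff)
  also have "\<dots> = (\<Sum>z\<in>UNIV. \<Sum>e\<in>UNIV. omega_tr (g (z + e) - g z))"
  proof (rule sum.cong[OF refl])
    fix z :: 'a
    have b: "bij_betw (\<lambda>e. z + e) UNIV (UNIV::'a set)"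
      by (rule bij_betwI[of _ _ _ "\<lambda>x. x - z"]) auto
    show "(\<Sum>y\<in>UNIV. omega_tr (g y - g z)) = (\<Sum>e\<in>UNIV. omega_tr (g (z + e) - g z))"
      using sum.reindex_bij_betw[OF b, of "\<lambda>y. omega_tr (g y - g z)"] by simp
  qed
  also have "\<dots> = (\<Sum>e\<in>UNIV. \<Sum>z\<in>UNIV. omega_tr (g (z + e) - g z))"
    by (rule sum.swap)
  also have "\<dots> = (\<Sum>e\<in>UNIV. if e = (0::'a) then of_nat CARD('a) else 0)"
  proof (intro sum.cong refl)
    fix e :: 'a
    show "(\<Sum>z\<in>UNIV. omega_tr (g (z + e) - g z)) = (if e = 0 then of_nat CARD('a) else 0)"
    proof (cases "e = 0")
      case True thus ?thesis by (simp add: omega_zero)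
    next
      case False
      have "g (z + e) - g z = difference f e z + c * e" for z
        unfolding g_def difference_def by (simp add: algebra_simps)
      hence "(\<Sum>z\<in>UNIV. omega_tr (g (z + e) - g z)) = (\<Sum>z\<in>UNIV. omega_tr (difference f e z)) * omega_tr (c * e)"
        by (simp add: omega_add sum_distrib_right)
      also have "(\<Sum>z\<in>UNIV. omega_tr (difference f e z)) = 0"
        using assms False unfolding planar_def by (intro char_sum_bij) auto
      finally show ?thesis using False by simp
    qed
  qed
  also have "\<dots> = of_nat CARD('a)" by simp
  finally have "?S * cnj ?S = of_nat CARD('a)" .
  hence "complex_of_real ((cmod ?S)^2) = of_nat CARD('a)" by (simp only: complex_norm_square)
  hence "(cmod ?S)^2 = real CARD('a)" by (metis of_real_eq_iff of_real_of_nat_eq)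
  thus ?thesis unfolding g_def .
qed




lemma sqrt_card_sq: "complex_of_real (sqrt (real CARD('a::finite))) * complex_of_real (sqrt (real CARD('a))) = of_nat CARD('a)"
proof -
  have "sqrt (real CARD('a)) * sqrt (real CARD('a)) = real CARD('a)" by simp
  hence "complex_of_real (sqrt (real CARD('a)) * sqrt (real CARD('a))) = complex_of_real (real CARD('a))" by simp
  thus ?thesis by (simp only: of_real_mult of_real_of_nat_eq)
qed

lemma alltop_inner:
  fixes A :: "'a::{field,finite} \<Rightarrow> 'a"
  shows "cinner (alltop_vec A a b) (alltop_vec A a' b') =
    omega_tr (b' * (a' - a)) / of_nat CARD('a) *
      (\<Sum>y\<in>UNIV. omega_tr (difference A (a' - a) y + (b' - b) * y))"
proof -
  let ?s = "complex_of_real (sqrt (real CARD('a)))"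
  define U where "U x = A (x + a) + b * (x + a)" for x
  define V where "V x = A (x + a') + b' * (x + a')" for x
  have "cinner (alltop_vec A a b) (alltop_vec A a' b') = (\<Sum>x\<in>UNIV. omega_tr (V x - U x) / of_nat CARD('a))"
    unfolding cinner_def alltop_vec_def
  proof (intro sum.cong refl)
    fix x
    have "cnj (omega_tr (A (x + a) + b * (x + a)) / ?s) * (omega_tr (A (x + a') + b' * (x + a')) / ?s)
        = (omega_tr (V x) * cnj (omega_tr (U x))) / (?s * ?s)"
      unfolding U_def V_def by (simp add: complex_cnj_divide mult.commute)
    also have "\<dots> = omega_tr (V x - U x) / of_nat CARD('a)"
      by (simp only: sqrt_card_sq omega_diff)
    finally show "cnj (omega_tr (A (x + a) + b * (x + a)) / ?s) * (omega_tr (A (x + a') + b' * (x + a')) / ?s)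
        = omega_tr (V x - U x) / of_nat CARD('a)" .
  qed
  also have "\<dots> = (\<Sum>y\<in>UNIV. omega_tr (V (y - a) - U (y - a)) / of_nat CARD('a))"
  proof -
    have bj: "bij_betw (\<lambda>y. y - a) UNIV (UNIV::'a set)"
      by (rule bij_betwI[of _ _ _ "\<lambda>x. x + a"]) auto
    show ?thesis using sum.reindex_bij_betw[OF bj, of "\<lambda>x. omega_tr (V x - U x) / of_nat CARD('a)"] by simp
  qed
  also have "\<dots> = (\<Sum>y\<in>UNIV. omega_tr (b' * (a' - a)) / of_nat CARD('a) *
      omega_tr (difference A (a' - a) y + (b' - b) * y))"
  proof (intro sum.cong refl)
    fix y
    have "V (y - a) - U (y - a) = (difference A (a' - a) y + (b' - b) * y) + b' * (a' - a)"
      unfolding U_def V_def difference_def by (simp add: algebra_simps)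
    thus "omega_tr (V (y - a) - U (y - a)) / of_nat CARD('a) = omega_tr (b' * (a' - a)) / of_nat CARD('a) *
      omega_tr (difference A (a' - a) y + (b' - b) * y)"
      by (simp add: omega_add)
  qed
  also have "\<dots> = omega_tr (b' * (a' - a)) / of_nat CARD('a) *
      (\<Sum>y\<in>UNIV. omega_tr (difference A (a' - a) y + (b' - b) * y))"
    by (simp add: sum_distrib_left)
  finally show ?thesis .
qed

lemma alltop_inner_norm:
  fixes A :: "'a::{field,finite} \<Rightarrow> 'a"
  assumes "alltop A"
  shows "cmod (cinner (alltop_vec A a b) (alltop_vec A a' b')) =
     (if a = a' then (if b = b' then 1 else 0) else 1 / sqrt (real CARD('a)))"
proof -
  let ?q = "real CARD('a)"
  let ?S = "\<Sum>y\<in>UNIV. omega_tr (difference A (a' - a) y + (b' - b) * y)"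
  have q0: "?q > 0" by simp
  have "cmod (cinner (alltop_vec A a b) (alltop_vec A a' b')) = cmod ?S / ?q"
    unfolding alltop_inner by (simp add: norm_mult norm_divide omega_norm)
  also have "\<dots> = (if a = a' then (if b = b' then 1 else 0) else 1 / sqrt ?q)"
  proof (cases "a = a'")
    case True
    have "?S = (\<Sum>y\<in>UNIV. omega_tr ((b' - b) * y))" using True by (simp add: difference_def)
    also have "\<dots> = (if b = b' then of_nat CARD('a) else 0)"
      using char_sum_lin[of "b' - b"] by (simp add: omega_zero)
    finally show ?thesis using True q0 by simp
  next
    case False
    have "planar (difference A (a' - a))" using assms False unfolding alltop_def by simp
    hence "(cmod ?S)^2 = ?q" by (rule planar_sum)
    hence "cmod ?S = sqrt ?q" by (metis norm_ge_zero real_sqrt_unique)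
    moreover have "sqrt ?q / ?q = 1 / sqrt ?q"
      using q0 by (metis real_div_sqrt div_by_1 divide_divide_eq_right less_le mult.commute
         real_sqrt_gt_zero times_divide_eq_right)
    ultimately show ?thesis using False by simp
  qed
  finally show ?thesis .
qed

definition ebas :: "'a::finite \<Rightarrow> 'a \<Rightarrow> complex" where
  "ebas x = (\<lambda>y. if y = x then 1 else 0)"

lemma std_basis_eq: "std_basis = range ebas"
  unfolding std_basis_def ebas_def by auto

lemma cinner_ev: "cinner (ebas x) v = v x"
proof -
  have "cinner (ebas x) v = (\<Sum>y\<in>UNIV. if y = x then v y else 0)"
    unfolding cinner_def ebas_def by (intro sum.cong) auto
  thus ?thesis by simp
qed

lemma cinner_ve: "cinner v (ebas x) = cnj (v x)"
proof -
  have "cinner v (ebas x) = (\<Sum>y\<in>UNIV. if y = x then cnj (v y) else 0)"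
    unfolding cinner_def ebas_def by (intro sum.cong) auto
  thus ?thesis by simp
qed

lemma cinner_ee: "cinner (ebas x) (ebas y) = (if x = y then 1 else 0)"
  unfolding cinner_ev by (simp add: ebas_def)

lemma alltop_vec_norm:
  fixes A :: "'a::{field,finite} \<Rightarrow> 'a"
  shows "cmod (alltop_vec A a b x) = 1 / sqrt (real CARD('a::{field,finite}))"
  unfolding alltop_vec_def by (simp add: norm_divide omega_norm)




theorem corollary1:
  fixes A :: "'a::{field,finite} \<Rightarrow> 'a"
  assumes "alltop A"
  shows "signal_set (alltop_set A) (CARD('a)^2 + CARD('a)) CARD('a)
         \<and> I_max (alltop_set A) = 1 / sqrt (real CARD('a))"
proof -
  let ?q = "real CARD('a)"
  let ?v = "alltop_vec A"
  define V where "V = (\<lambda>(a,b). ?v a b) ` (UNIV :: ('a \<times> 'a) set)"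
  define E where "E = range (ebas :: 'a \<Rightarrow> 'a \<Rightarrow> complex)"
  have C: "alltop_set A = V \<union> E"
    unfolding alltop_set_def V_def E_def std_basis_eq by auto
  have q2: "?q \<ge> 2" using ff_card_ge2[where 'a='a] by simp
  have sq1: "sqrt ?q > 1" using q2 by simp
  have isq: "1 / sqrt ?q < 1" using sq1 by simp
  have isq0: "1 / sqrt ?q > 0" using sq1 by simp
  have nv: "cmod (cinner (?v a b) (?v a' b')) \<le> 1 / sqrt ?q" if "(a, b) \<noteq> (a', b')" for a b a' b'
    using that alltop_inner_norm[OF assms, of a b a' b'] isq0 by auto
  have injV: "inj (\<lambda>(a,b). ?v a b)"
  proof (rule injI, clarify)
    fix a b a' b' assume eq: "?v a b = ?v a' b'"
    show "a = a' \<and> b = b'"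
    proof (rule ccontr)
      assume "\<not> (a = a' \<and> b = b')"
      hence "cmod (cinner (?v a b) (?v a' b')) \<le> 1 / sqrt ?q" using nv by auto
      moreover have "cmod (cinner (?v a b) (?v a' b')) = 1"
        using eq alltop_inner_norm[OF assms, of a' b' a' b'] by simp
      ultimately show False using isq by simp
    qed
  qed
  have injE: "inj (ebas :: 'a \<Rightarrow> 'a \<Rightarrow> complex)"
  proof (rule injI)
    fix x y :: 'a assume "ebas x = ebas y"
    hence "ebas x x = ebas y x" by simp
    thus "x = y" unfolding ebas_def by (auto split: if_splits)
  qed
  have ve: "?v a b \<noteq> ebas x" for a b x
  proof
    assume "?v a b = ebas x"
    hence "cmod (?v a b x) = 1" by (simp add: ebas_def)
    thus False using alltop_vec_norm[of A a b x] isq by simp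
  qed
  have disj: "V \<inter> E = {}" unfolding V_def E_def using ve by auto
  have cV: "card V = CARD('a)^2"
    unfolding V_def using card_image[OF injV] by (simp add: UNIV_Times_UNIV[symmetric] card_cartesian_product power2_eq_square del: UNIV_Times_UNIV)
  have cE: "card E = CARD('a)" unfolding E_def using card_image[OF injE] by simp
  have fin: "finite (alltop_set A)" unfolding C V_def E_def by simp
  have card: "card (alltop_set A) = CARD('a)^2 + CARD('a)"
    unfolding C using card_Un_disjoint[OF _ _ disj] cV cE unfolding V_def E_def by simp
  have norms: "\<forall>u\<in>alltop_set A. vnorm u = 1"
  proof
    fix u assume "u \<in> alltop_set A"
    hence "u \<in> V \<or> u \<in> E" unfolding C by auto
    hence "cmod (cinner u u) = 1"
    proof
      assume "u \<in> V" then obtain a b where "u = ?v a b" unfolding V_def by auto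
      thus ?thesis using alltop_inner_norm[OF assms, of a b a b] by simp
    next
      assume "u \<in> E" then obtain x where "u = ebas x" unfolding E_def by auto
      thus ?thesis by (simp add: cinner_ee)
    qed
    thus "vnorm u = 1" unfolding vnorm_def by simp
  qed
  have sig: "signal_set (alltop_set A) (CARD('a)^2 + CARD('a)) CARD('a)"
    unfolding signal_set_def using card norms by simp
  define D where "D = {cmod (cinner u v) | u v. u \<in> alltop_set A \<and> v \<in> alltop_set A \<and> u \<noteq> v}"
  have finD: "finite D"
  proof -
    have "D \<subseteq> (\<lambda>(u,v). cmod (cinner u v)) ` (alltop_set A \<times> alltop_set A)"
      unfolding D_def by auto
    thus ?thesis by (rule finite_subset) (use fin in simp)
  qed
  have bound: "d \<le> 1 / sqrt ?q" if dD: "d \<in> D" for d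
  proof -
    obtain u w where d: "d = cmod (cinner u w)" and u: "u \<in> V \<or> u \<in> E" and w: "w \<in> V \<or> w \<in> E"
      and uw: "u \<noteq> w"
      using dD unfolding D_def C by blast
    show ?thesis
    proof (cases "u \<in> V")
      case True
      then obtain a b where ua: "u = ?v a b" unfolding V_def by auto
      show ?thesis
      proof (cases "w \<in> V")
        case True
        then obtain a' b' where wa: "w = ?v a' b'" unfolding V_def by auto
        have "(a, b) \<noteq> (a', b')" using uw ua wa by auto
        thus ?thesis using nv d ua wa by simp
      next
        case False
        then obtain x where "w = ebas x" using w unfolding E_def by auto
        thus ?thesis using d ua by (simp add: cinner_ve alltop_vec_norm)
      qed
    next
      case False
      then obtain x where ux: "u = ebas x" using u unfolding E_def by auto
      show ?thesis
      proof (cases "w \<in> V")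
        case True
        then obtain a' b' where "w = ?v a' b'" unfolding V_def by auto
        thus ?thesis using d ux by (simp add: cinner_ev alltop_vec_norm)
      next
        case False
        then obtain y where wy: "w = ebas y" using w unfolding E_def by auto
        have "x \<noteq> y" using uw ux wy by auto
        thus ?thesis using d ux wy isq0 by (simp add: cinner_ee)
      qed
    qed
  qed
  have mem: "1 / sqrt ?q \<in> D"
  proof -
    have "ebas 0 \<in> alltop_set A" "?v 0 0 \<in> alltop_set A" unfolding C V_def E_def by auto
    moreover have "ebas 0 \<noteq> ?v 0 0" using ve by metis
    moreover have "cmod (cinner (ebas 0) (?v 0 0)) = 1 / sqrt ?q"
      by (simp add: cinner_ev alltop_vec_norm)
    ultimately show ?thesis unfolding D_def by (metis (mono_tags, lifting) mem_Collect_eq)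
  qed
  have "I_max (alltop_set A) = 1 / sqrt ?q"
    unfolding I_max_def D_def[symmetric] by (rule Max_eqI[OF finD bound mem])
  thus ?thesis using sig by simp
qed


end
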